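(* Let $\pi>0$, $\bar d>0$, $0<\theta_1<\dots<\theta_K$, $0\le\beta_1<\dots<\beta_M\le1$, and let $A:[0,D]\to[0,\bar d]$ be continuously differentiable and decreasing. Let $\sigma(Q,\beta,\theta)=-[\theta\beta+\pi(1-\beta)]A'(Q)$ and enumerate the $KM$ types as $\Lambda_1,\dots,\Lambda_{KM}$ with $\sigma(Q,\Lambda_1)\le\dots\le\sigma(Q,\Lambda_{KM})$ for all $Q$. Let $L(Q,\beta,\theta)=\theta[\bar d-\beta A(Q)]-\pi(1-\beta)A(Q)$ and $\bar S(Q,\Pi,\Lambda)=L(Q,\Lambda)-\Pi$. Say items $\phi_i=(Q_i,\Pi_i)$ and $\phi_j=(Q_j,\Pi_j)$ are pairwise incentive compatible if $\bar S(Q_i,\Pi_i,\Lambda_i)\ge\bar S(Q_j,\Pi_j,\Lambda_i)$ and $\bar S(Q_j,\Pi_j,\Lambda_j)\ge\bar S(Q_i,\Pi_i,\Lambda_j)$. Let $\{(Q_i,\Pi_i)\}_{i=1}^{KM}$ with $Q_i\in[0,D]$ satisfy $Q_1\le\dots\le Q_{KM}$ and $\Pi_1\le\dots\le\Pi_{KM}$. Then for any $i_1<i_2<i_3$: if $\phi_{i_1},\phi_{i_2}$ are pairwise incentive compatible and $\phi_{i_2},\phi_{i_3}$ are pairwise incentive compatible, then $\phi_{i_1},\phi_{i_3}$ are pairwise incentive compatible.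
   Context: Model: an operator offers one contract item (data cap $Q_i$, fee $\Pi_i$) for each user type $\Lambda_i=(\beta,\theta)$ (network substitutability $\beta$, data valuation $\theta$). $\pi$ is the overage price, $\bar d$ the mean demand, $A(Q)$ the expected overage consumption under cap $Q$ (decreasing, convex). $\sigma$ is the willingness-to-pay, by which types are sorted (the ordering does not depend on $Q$). *)

theory Defs
  imports "HOL-Analysis.Analysis"
begin

text \<open>A user type is a pair (beta, theta): network substitutability and data valuation.
  pio is the overage price, dbar the mean demand, A the expected overage consumption.\<close>

definition sigma :: "real \<Rightarrow> (real \<Rightarrow> real) \<Rightarrow> real \<Rightarrow> real \<times> real \<Rightarrow> real" where
  "sigma pio A' Q \<Lambda> = - ((snd \<Lambda> * fst \<Lambda> + pio * (1 - fst \<Lambda>)) * A' Q)"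

definition Lfun :: "real \<Rightarrow> real \<Rightarrow> (real \<Rightarrow> real) \<Rightarrow> real \<Rightarrow> real \<times> real \<Rightarrow> real" where
  "Lfun pio dbar A Q \<Lambda> = snd \<Lambda> * (dbar - fst \<Lambda> * A Q) - pio * (1 - fst \<Lambda>) * A Q"

definition Sbar :: "real \<Rightarrow> real \<Rightarrow> (real \<Rightarrow> real) \<Rightarrow> real \<Rightarrow> real \<Rightarrow> real \<times> real \<Rightarrow> real" where
  "Sbar pio dbar A Q fee \<Lambda> = Lfun pio dbar A Q \<Lambda> - fee"

definition pairwise_IC :: "real \<Rightarrow> real \<Rightarrow> (real \<Rightarrow> real) \<Rightarrow> (nat \<Rightarrow> real \<times> real)
    \<Rightarrow> (nat \<Rightarrow> real) \<Rightarrow> (nat \<Rightarrow> real) \<Rightarrow> nat \<Rightarrow> nat \<Rightarrow> bool" where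
  "pairwise_IC pio dbar A lam Q P i j \<longleftrightarrow>
     Sbar pio dbar A (Q i) (P i) (lam i) \<ge> Sbar pio dbar A (Q j) (P j) (lam i) \<and>
     Sbar pio dbar A (Q j) (P j) (lam j) \<ge> Sbar pio dbar A (Q i) (P i) (lam j)"

end

theory Submission
  imports Defs
begin

theorem lemma5:
  fixes pio dbar D :: real and A A' :: "real \<Rightarrow> real" and K M :: nat
    and theta beta :: "nat \<Rightarrow> real" and lam :: "nat \<Rightarrow> real \<times> real"
    and Q P :: "nat \<Rightarrow> real" and i1 i2 i3 :: nat
  assumes pio: "pio > 0" and dbar: "dbar > 0"
    and theta_pos: "0 < theta 1"
    and theta_mono: "\<forall>k. 1 \<le> k \<and> k < K \<longrightarrow> theta k < theta (Suc k)"
    and beta_lo: "0 \<le> beta 1" and beta_hi: "beta M \<le> 1"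
    and beta_mono: "\<forall>m. 1 \<le> m \<and> m < M \<longrightarrow> beta m < beta (Suc m)"
    and A_deriv: "\<forall>x\<in>{0..D}. (A has_real_derivative A' x) (at x within {0..D})"
    and A'_cont: "continuous_on {0..D} A'"
    and A_decr: "\<forall>x\<in>{0..D}. \<forall>y\<in>{0..D}. x \<le> y \<longrightarrow> A y \<le> A x"
    and A_range: "\<forall>x\<in>{0..D}. 0 \<le> A x \<and> A x \<le> dbar"
    and lam_enum: "bij_betw lam {1..K*M} (beta ` {1..M} \<times> theta ` {1..K})"
    and lam_sorted: "\<forall>q\<in>{0..D}. \<forall>i\<in>{1..K*M}. \<forall>j\<in>{1..K*M}.
                       i \<le> j \<longrightarrow> sigma pio A' q (lam i) \<le> sigma pio A' q (lam j)"
    and Q_range: "\<forall>i\<in>{1..K*M}. Q i \<in> {0..D}"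
    and Q_mono: "\<forall>i\<in>{1..K*M}. \<forall>j\<in>{1..K*M}. i \<le> j \<longrightarrow> Q i \<le> Q j"
    and P_mono: "\<forall>i\<in>{1..K*M}. \<forall>j\<in>{1..K*M}. i \<le> j \<longrightarrow> P i \<le> P j"
    and idx: "1 \<le> i1" "i1 < i2" "i2 < i3" "i3 \<le> K*M"
    and ic12: "pairwise_IC pio dbar A lam Q P i1 i2"
    and ic23: "pairwise_IC pio dbar A lam Q P i2 i3"
  shows "pairwise_IC pio dbar A lam Q P i1 i3"
proof -
  define c where "c k = snd (lam k) * fst (lam k) + pio * (1 - fst (lam k))" for k
  have S: "Sbar pio dbar A q f (lam k) = snd (lam k) * dbar - c k * A q - f" for q f k
    unfolding Sbar_def Lfun_def c_def by (simp add: algebra_simps)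
  have r1: "i1 \<in> {1..K*M}" "i2 \<in> {1..K*M}" "i3 \<in> {1..K*M}" using idx by auto
  have q12: "Q i1 \<le> Q i2" and q23: "Q i2 \<le> Q i3" using Q_mono r1 idx by auto
  have qr: "Q i1 \<in> {0..D}" "Q i2 \<in> {0..D}" "Q i3 \<in> {0..D}" using Q_range r1 by auto
  have x12: "A (Q i2) \<le> A (Q i1)" and x23: "A (Q i3) \<le> A (Q i2)"
    using A_decr qr q12 q23 by auto
  have e12: "c i1 * (A (Q i1) - A (Q i2)) \<le> P i2 - P i1"
       "P i2 - P i1 \<le> c i2 * (A (Q i1) - A (Q i2))"
    using ic12 unfolding pairwise_IC_def S by (auto simp: algebra_simps)
  have e23: "c i2 * (A (Q i2) - A (Q i3)) \<le> P i3 - P i2"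
       "P i3 - P i2 \<le> c i3 * (A (Q i2) - A (Q i3))"
    using ic23 unfolding pairwise_IC_def S by (auto simp: algebra_simps)
  have key: "A (Q i1) = A (Q i3) \<or> (c i1 \<le> c i2 \<and> c i2 \<le> c i3)"
  proof (cases "A (Q i1) = A (Q i3)")
    case True then show ?thesis by simp
  next
    case False
    have lt: "Q i1 < Q i3"
    proof (rule ccontr)
      assume "\<not> Q i1 < Q i3"
      then have "Q i1 = Q i3" using q12 q23 by linarith
      then show False using False by simp
    qed
    have sub: "{Q i1..Q i3} \<subseteq> {0..D}" using qr by auto
    have "\<forall>x\<in>{Q i1..Q i3}. (A has_derivative (\<lambda>h. A' x * h)) (at x within {Q i1..Q i3})"
    proof
      fix x assume "x \<in> {Q i1..Q i3}"
      then have "x \<in> {0..D}" using sub by auto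
      then have "(A has_real_derivative A' x) (at x within {0..D})" using A_deriv by auto
      then have "(A has_real_derivative A' x) (at x within {Q i1..Q i3})"
        using DERIV_subset sub by blast
      then show "(A has_derivative (\<lambda>h. A' x * h)) (at x within {Q i1..Q i3})"
        by (simp add: has_field_derivative_def)
    qed
    then obtain z where z: "z \<in> {Q i1..Q i3}" "A (Q i3) - A (Q i1) = A' z * (Q i3 - Q i1)"
      using mvt_very_simple[of "Q i1" "Q i3" A "\<lambda>x h. A' x * h"] lt by auto
    have "A (Q i3) < A (Q i1)" using False x12 x23 by linarith
    then have neg: "A' z < 0" using z(2) lt
      by (smt (verit) mult_nonneg_nonneg)
    have zD: "z \<in> {0..D}" using z sub by auto
    have "sigma pio A' z (lam i1) \<le> sigma pio A' z (lam i2)"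
         "sigma pio A' z (lam i2) \<le> sigma pio A' z (lam i3)"
      using lam_sorted zD r1 idx by auto
    then have "- (c i1 * A' z) \<le> - (c i2 * A' z)" "- (c i2 * A' z) \<le> - (c i3 * A' z)"
      unfolding sigma_def c_def by (simp_all add: mult.commute)
    then show ?thesis using neg
      by (auto simp: mult_le_cancel_right)
  qed
  show ?thesis
  proof (cases "A (Q i1) = A (Q i3)")
    case True
    then have "A (Q i2) = A (Q i1)" "A (Q i3) = A (Q i1)" using x12 x23 by auto
    then show ?thesis using e12 e23 unfolding pairwise_IC_def S by auto
  next
    case False
    with key have c: "c i1 \<le> c i2" "c i2 \<le> c i3" by auto
    have m1: "c i1 * (A (Q i2) - A (Q i3)) \<le> c i2 * (A (Q i2) - A (Q i3))"
      using c x23 by (intro mult_right_mono) auto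
    have m2: "c i2 * (A (Q i1) - A (Q i2)) \<le> c i3 * (A (Q i1) - A (Q i2))"
      using c x12 by (intro mult_right_mono) auto
    have g1: "c i1 * (A (Q i1) - A (Q i3)) \<le> P i3 - P i1"
      using e12 e23 m1 by (simp add: algebra_simps)
    have g2: "P i3 - P i1 \<le> c i3 * (A (Q i1) - A (Q i3))"
      using e12 e23 m2 by (simp add: algebra_simps)
    show ?thesis using g1 g2 unfolding pairwise_IC_def S by (simp add: algebra_simps)
  qed
qed

end
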